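(* Let $m\geq 3$ be an odd integer. Let $g:\mathrm{GF}(2^m)\to\mathrm{GF}(2^m)$ be an almost bent function with $g(0)=0$. Let $A$ be an additive subgroup of $(\mathrm{GF}(2^m),+)$ of order $2^r$, where $0\leq r\leq m$. Define the binary code $$\mathcal{C}_{(g,A)}=\{(\mathrm{Tr}_1^m(ag(x)+bx))_{x\in \mathrm{GF}(2^m)^*}: a\in A,\ b\in \mathrm{GF}(2^m)\}.$$ Then $\mathcal{C}_{(g,A)}$ is a binary linear code with parameters $[2^m-1,\ m+r,\ 2^{m-1}-2^{(m-1)/2}]$ and weight distribution: weight $0$ with multiplicity $1$; weight $2^{m-1}-2^{(m-1)/2}$ with multiplicity $(2^r-1)(2^{m-2}+2^{(m-3)/2})$; weight $2^{m-1}$ with multiplicity $2^{m-1}(2^r+1)-1$; weight $2^{m-1}+2^{(m-1)/2}$ with multiplicity $(2^r-1)(2^{m-2}-2^{(m-3)/2})$; and no other weights occur.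
   Context: $\mathrm{Tr}_1^m$ denotes the absolute trace from $\mathrm{GF}(2^m)$ to $\mathrm{GF}(2)$. For $g:\mathrm{GF}(2^m)\to\mathrm{GF}(2^m)$ and $a,b\in\mathrm{GF}(2^m)$ set $\lambda_g(a,b)=\sum_{x\in\mathrm{GF}(2^m)}(-1)^{\mathrm{Tr}_1^m(ag(x)+bx)}$; $g$ is called almost bent if $\lambda_g(a,b)\in\{0,\pm 2^{(m+1)/2}\}$ for every pair $(a,b)$ with $a\neq 0$. The codewords are indexed by the elements of $\mathrm{GF}(2^m)^*$ in some fixed order. An $[n,k,d]$ code has length $n$, dimension $k$ and minimum Hamming distance $d$; the weight distribution lists, for each $w$, the number $A_w$ of codewords of Hamming weight $w$. *)

theory Defs
  imports Main
begin

text \<open>GF(2^m) is modelled by an arbitrary finite field type 'a with CARD('a) = 2^m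
  and characteristic 2 (every such field is GF(2^m) up to isomorphism).\<close>

definition tr :: "nat \<Rightarrow> 'a::field \<Rightarrow> 'a" where
  "tr m x = (\<Sum>i<m. x ^ (2 ^ i))"

definition walsh :: "nat \<Rightarrow> ('a::{field,finite} \<Rightarrow> 'a) \<Rightarrow> 'a \<Rightarrow> 'a \<Rightarrow> int" where
  "walsh m g a b = (\<Sum>x\<in>UNIV. (if tr m (a * g x + b * x) = 0 then 1 else -1))"

definition almost_bent :: "nat \<Rightarrow> ('a::{field,finite} \<Rightarrow> 'a) \<Rightarrow> bool" where
  "almost_bent m g \<longleftrightarrow>
     (\<forall>a b. a \<noteq> 0 \<longrightarrow> walsh m g a b \<in> {0, 2 ^ ((m + 1) div 2), - (2 ^ ((m + 1) div 2))})"

text \<open>Codewords are functions indexed by the nonzero field elements; the value at 0 is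
  a dummy set to 0. Entries lie in GF(2) = {0,1} inside the field.\<close>

definition codeword :: "nat \<Rightarrow> ('a::field \<Rightarrow> 'a) \<Rightarrow> 'a \<Rightarrow> 'a \<Rightarrow> 'a \<Rightarrow> 'a" where
  "codeword m g a b = (\<lambda>x. if x = 0 then 0 else tr m (a * g x + b * x))"

definition code_gA :: "nat \<Rightarrow> ('a::field \<Rightarrow> 'a) \<Rightarrow> 'a set \<Rightarrow> ('a \<Rightarrow> 'a) set" where
  "code_gA m g A = {codeword m g a b | a b. a \<in> A}"

definition hweight :: "('a::field \<Rightarrow> 'a) \<Rightarrow> nat" where
  "hweight c = card {x. x \<noteq> 0 \<and> c x \<noteq> 0}"

definition additive_subgroup :: "'a::field set \<Rightarrow> bool" where
  "additive_subgroup A \<longleftrightarrow> 0 \<in> A \<and> (\<forall>x\<in>A. \<forall>y\<in>A. x + y \<in> A) \<and> (\<forall>x\<in>A. - x \<in> A)"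

end

theory Submission
  imports Defs "HOL-Computational_Algebra.Polynomial"
begin

context
  fixes m :: nat
  assumes q: "card (UNIV::'a::{field,finite} set) = 2 ^ m"
    and c2: "(1::'a) + 1 = 0"
begin

lemma char2_add_self: "(x::'a) + x = 0"
proof -
  have "x + x = (1 + 1) * x" by (simp add: distrib_right)
  thus ?thesis using c2 by simp
qed

lemma char2_minus: "- (x::'a) = x"
  using char2_add_self[of x] by (simp add: add_eq_0_iff)

lemma char2_diff: "(x::'a) - y = x + y"
  using char2_minus[of y] by (metis diff_conv_add_uminus)

lemma frob_add2: "((x::'a) + y) ^ 2 = x ^ 2 + y ^ 2"
proof -
  have "(x + y) ^ 2 = x^2 + y^2 + (x*y + x*y)" by (simp add: power2_eq_square algebra_simps)
  thus ?thesis using char2_add_self by simp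
qed

lemma frob_add: "((x::'a) + y) ^ (2 ^ i) = x ^ (2 ^ i) + y ^ (2 ^ i)"
proof (induction i)
  case 0 then show ?case by simp
next
  case (Suc i)
  have "(x + y) ^ (2 ^ Suc i) = ((x + y) ^ (2 ^ i)) ^ 2" by (simp add: power_mult[symmetric] mult.commute)
  also have "\<dots> = (x ^ (2 ^ i)) ^ 2 + (y ^ (2 ^ i)) ^ 2" using Suc frob_add2 by simp
  also have "\<dots> = x ^ (2 ^ Suc i) + y ^ (2 ^ Suc i)" by (simp add: power_mult[symmetric] mult.commute)
  finally show ?case .
qed

lemma fermat: "(x::'a) ^ (2 ^ m) = x"
proof (cases "x = 0")
  case True then show ?thesis by simp
next
  case False
  let ?N = "{y::'a. y \<noteq> 0}"
  have cN: "card ?N = 2 ^ m - 1"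
  proof -
    have "?N = UNIV - {0}" by auto
    then show ?thesis using q by (simp add: card_Diff_subset)
  qed
  have bij: "bij_betw (\<lambda>y. x * y) ?N ?N"
    unfolding bij_betw_def inj_on_def using False
  proof (intro conjI)
    show "(\<lambda>y. x * y) ` ?N = ?N"
    proof
      show "(\<lambda>y. x * y) ` ?N \<subseteq> ?N" using False by auto
      show "?N \<subseteq> (\<lambda>y. x * y) ` ?N"
      proof
        fix y :: 'a assume "y \<in> ?N"
        then have "y = x * (y / x)" "y / x \<in> ?N" using False by auto
        then show "y \<in> (\<lambda>y. x * y) ` ?N" by blast
      qed
    qed
  qed auto
  have "(\<Prod>y\<in>?N. y) = (\<Prod>y\<in>?N. x * y)"
    using prod.reindex_bij_betw[OF bij, of "\<lambda>y. y"] by simp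
  also have "\<dots> = x ^ card ?N * (\<Prod>y\<in>?N. y)" by (simp add: prod.distrib)
  finally have e: "(\<Prod>y\<in>?N. y) = x ^ card ?N * (\<Prod>y\<in>?N. y)" .
  have nz: "(\<Prod>y\<in>?N. y) \<noteq> 0" by simp
  have "x ^ card ?N = 1"
  proof -
    have "1 * (\<Prod>y\<in>?N. y) = x ^ card ?N * (\<Prod>y\<in>?N. y)" using e by simp
    then show ?thesis using nz mult_right_cancel by metis
  qed
  then have "x ^ (2 ^ m - 1) = 1" using cN by simp
  then have "x * x ^ (2 ^ m - 1) = x" by simp
  moreover have "(2::nat) ^ m = Suc (2 ^ m - 1)" by simp
  ultimately show ?thesis by (metis power_Suc)
qed

lemma m_pos: "m \<ge> 1"
proof (rule ccontr)
  assume "\<not> m \<ge> 1" then have "card (UNIV::'a set) = 1" using q by simp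
  then have "(0::'a) = 1" by (metis UNIV_I card_1_singletonE singletonD)
  then show False by simp
qed

lemma tr_add: "tr m ((x::'a) + y) = tr m x + tr m y"
  unfolding tr_def by (simp add: frob_add sum.distrib)

lemma tr_zero: "tr m (0::'a) = 0"
  unfolding tr_def by (simp add: power_0_left)

lemma tr_sq: "(tr m (x::'a)) ^ 2 = tr m x"
proof -
  have sq: "(\<Sum>i<n. x ^ (2 ^ i)) ^ 2 = (\<Sum>i<n. x ^ (2 ^ Suc i))" for n
  proof (induction n)
    case 0 then show ?case by simp
  next
    case (Suc n)
    have "(\<Sum>i<Suc n. x ^ (2 ^ i)) ^ 2 = (\<Sum>i<n. x ^ (2 ^ i)) ^ 2 + (x ^ (2^n))^2"
      by (simp add: frob_add2)
    also have "(x ^ (2^n))^2 = x ^ (2 ^ Suc n)" by (simp add: power_mult[symmetric] mult.commute)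
    finally show ?case using Suc by simp
  qed
  have "(\<Sum>i<m. x ^ (2 ^ Suc i)) = (\<Sum>i<m. x ^ (2 ^ i))"
  proof -
    obtain k where k: "m = Suc k" using m_pos by (cases m) auto
    have "(\<Sum>i<Suc k. x ^ (2 ^ Suc i)) = (\<Sum>i<k. x ^ (2 ^ Suc i)) + x ^ (2 ^ Suc k)" by simp
    also have "x ^ (2 ^ Suc k) = x" using fermat k by simp
    also have "(\<Sum>i<Suc k. x ^ (2 ^ i)) = x + (\<Sum>i<k. x ^ (2 ^ Suc i))"
      by (subst sum.lessThan_Suc_shift) simp
    ultimately show ?thesis using k by (simp add: add.commute)
  qed
  then show ?thesis unfolding tr_def sq by simp
qed

lemma tr_01: "tr m (x::'a) = 0 \<or> tr m x = 1"
proof -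
  have "tr m x * (tr m x - 1) = 0" using tr_sq[of x] by (simp add: power2_eq_square algebra_simps)
  then show ?thesis by auto
qed

lemma tr_nonzero: "\<exists>z::'a. tr m z = 1"
proof -
  define p :: "'a poly" where "p = (\<Sum>i<m. monom 1 (2 ^ i))"
  have ev: "poly p x = tr m x" for x unfolding p_def tr_def by (simp add: poly_sum poly_monom)
  have cf: "coeff p n = (if \<exists>i<m. n = 2 ^ i then 1 else 0)" for n
  proof -
    have "coeff p n = (\<Sum>i<m. if 2 ^ i = n then 1 else 0)"
      unfolding p_def by (simp add: coeff_sum coeff_monom)
    also have "\<dots> = (if \<exists>i<m. n = 2 ^ i then 1 else 0)"
    proof (cases "\<exists>i<m. n = 2 ^ i")
      case True
      then obtain i where i: "i < m" "n = 2 ^ i" by auto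
      have "(\<Sum>j<m. if 2 ^ j = n then (1::'a) else 0) = (\<Sum>j\<in>{i}. 1)"
        by (rule sum.mono_neutral_cong_right) (use i in auto)
      then show ?thesis using True by simp
    next
      case False then show ?thesis by (auto intro!: sum.neutral)
    qed
    finally show ?thesis .
  qed
  have pnz: "p \<noteq> 0"
  proof
    assume "p = 0"
    then have "coeff p 1 = 0" by simp
    moreover have "\<exists>i<m. (1::nat) = 2 ^ i" using m_pos by (intro exI[of _ 0]) auto
    ultimately show False using cf[of 1] by simp
  qed
  have deg: "degree p \<le> 2 ^ (m - 1)"
  proof (rule degree_le)
    show "\<forall>n>2 ^ (m - 1). coeff p n = 0"
    proof (intro allI impI)
      fix n :: nat assume n: "2 ^ (m - 1) < n"
      have "\<not> (\<exists>i<m. n = 2 ^ i)"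
      proof
        assume "\<exists>i<m. n = 2 ^ i"
        then obtain i where "i < m" "n = 2 ^ i" by auto
        then have "n \<le> 2 ^ (m - 1)" by (simp add: power_increasing)
        then show False using n by simp
      qed
      then show "coeff p n = 0" using cf by simp
    qed
  qed
  have "card {x. poly p x = 0} < card (UNIV::'a set)"
  proof -
    have "card {x. poly p x = 0} \<le> 2 ^ (m - 1)" using card_poly_roots_bound[OF pnz] deg by simp
    also have "\<dots> < 2 ^ m" using m_pos by simp
    finally show ?thesis using q by simp
  qed
  then have "{x. poly p x = 0} \<noteq> UNIV" by auto
  then obtain z where "poly p z \<noteq> 0" by auto
  then have "tr m z \<noteq> 0" using ev by simp
  then show ?thesis using tr_01 by blast
qed

end

definition chi :: "'a::field \<Rightarrow> int" where "chi t = (if t = 0 then 1 else -1)"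

context
  fixes m :: nat
  assumes q: "card (UNIV::'a::{field,finite} set) = 2 ^ m"
    and c2: "(1::'a) + 1 = 0"
begin

lemma chi_tr_add: "chi (tr m ((x::'a) + y)) = chi (tr m x) * chi (tr m y)"
  using tr_01[OF q c2, of x] tr_01[OF q c2, of y] tr_add[OF q c2, of x y] c2
  by (auto simp: chi_def)

lemma chi_sq: "chi (t::'a) * chi t = 1" by (simp add: chi_def)

lemma char_sum: assumes "(c::'a) \<noteq> 0" shows "(\<Sum>x\<in>UNIV. chi (tr m (c * x))) = 0"
proof -
  obtain z :: 'a where z: "tr m z = 1" using tr_nonzero[OF q c2] by blast
  let ?S = "(\<Sum>x\<in>UNIV. chi (tr m (c * x)))"
  have bij: "bij_betw (\<lambda>x. x + z / c) UNIV UNIV"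
    by (rule bij_betw_byWitness[of _ "\<lambda>x. x - z / c"]) auto
  have "?S = (\<Sum>x\<in>UNIV. chi (tr m (c * (x + z / c))))"
    using sum.reindex_bij_betw[OF bij, of "\<lambda>x. chi (tr m (c * x))"] by simp
  also have "\<dots> = (\<Sum>x\<in>UNIV. chi (tr m (c * x)) * chi (tr m z))"
    using assms by (simp add: distrib_left chi_tr_add)
  also have "\<dots> = - ?S" using z by (simp add: chi_def sum_negf)
  finally show ?thesis by simp
qed

lemma orth: "(\<Sum>b\<in>UNIV. chi (tr m (b * (y::'a)))) = (if y = 0 then 2 ^ m else 0)"
proof (cases "y = 0")
  case True then show ?thesis using q tr_zero[OF q c2] by (simp add: chi_def)
next
  case False then show ?thesis using char_sum[of y] by (simp add: mult.commute)
qed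

lemma walsh_eq: fixes g :: "'a \<Rightarrow> 'a"
  shows "walsh m g a b = (\<Sum>x\<in>UNIV. chi (tr m (a * g x)) * chi (tr m (b * x)))"
  unfolding walsh_def
proof (rule sum.cong[OF refl])
  fix x
  have "(if tr m (a * g x + b * x) = 0 then 1 else - 1) = chi (tr m (a * g x + b * x))"
    by (simp add: chi_def)
  then show "(if tr m (a * g x + b * x) = 0 then 1 else - 1) = chi (tr m (a * g x)) * chi (tr m (b * x))"
    using chi_tr_add by simp
qed

lemma walsh_sum: fixes g :: "'a \<Rightarrow> 'a" assumes "g 0 = 0" shows "(\<Sum>b\<in>UNIV. walsh m g a b) = 2 ^ m"
proof -
  have "(\<Sum>b\<in>UNIV. walsh m g a b) = (\<Sum>x\<in>UNIV. chi (tr m (a * g x)) * (\<Sum>b\<in>UNIV. chi (tr m (b * x))))"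
    unfolding walsh_eq by (subst sum.swap) (simp add: sum_distrib_left)
  also have "\<dots> = (\<Sum>x\<in>UNIV. if x = 0 then chi (tr m (a * g x)) * 2 ^ m else 0)"
    by (rule sum.cong[OF refl]) (simp add: orth)
  also have "\<dots> = chi (tr m (a * g 0)) * 2 ^ m" by simp
  also have "\<dots> = 2 ^ m" using assms tr_zero[OF q c2] by (simp add: chi_def)
  finally show ?thesis .
qed

lemma walsh_sq: fixes g :: "'a \<Rightarrow> 'a" shows "(\<Sum>b\<in>UNIV. (walsh m g a b)^2) = 2 ^ (2 * m)"
proof -
  let ?f = "\<lambda>x. chi (tr m (a * g (x::'a)))"
  have "(\<Sum>b\<in>UNIV. (walsh m g a b)^2)
     = (\<Sum>b\<in>UNIV. \<Sum>x\<in>UNIV. \<Sum>y\<in>UNIV. ?f x * ?f y * chi (tr m (b * (x + y))))"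
  proof (rule sum.cong[OF refl])
    fix b
    have "(walsh m g a b)^2 = (\<Sum>x\<in>UNIV. \<Sum>y\<in>UNIV. (?f x * chi (tr m (b * x))) * (?f y * chi (tr m (b * y))))"
      unfolding walsh_eq power2_eq_square sum_product ..
    also have "\<dots> = (\<Sum>x\<in>UNIV. \<Sum>y\<in>UNIV. ?f x * ?f y * chi (tr m (b * (x + y))))"
      by (simp add: distrib_left chi_tr_add mult_ac)
    finally show "(walsh m g a b)^2 = \<dots>" .
  qed
  also have "\<dots> = (\<Sum>x\<in>UNIV. \<Sum>y\<in>UNIV. ?f x * ?f y * (\<Sum>b\<in>UNIV. chi (tr m (b * (x + y)))))"
  proof -
    have "(\<Sum>b\<in>UNIV. \<Sum>x\<in>UNIV. \<Sum>y\<in>UNIV. ?f x * ?f y * chi (tr m (b * (x + y))))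
      = (\<Sum>x\<in>UNIV. \<Sum>b\<in>UNIV. \<Sum>y\<in>UNIV. ?f x * ?f y * chi (tr m (b * (x + y))))"
      by (rule sum.swap)
    also have "\<dots> = (\<Sum>x\<in>UNIV. \<Sum>y\<in>UNIV. \<Sum>b\<in>UNIV. ?f x * ?f y * chi (tr m (b * (x + y))))"
      by (rule sum.cong[OF refl], rule sum.swap)
    finally show ?thesis by (simp add: sum_distrib_left)
  qed
  also have "\<dots> = (\<Sum>x\<in>UNIV. \<Sum>y\<in>UNIV. if y = x then ?f x * ?f x * 2 ^ m else 0)"
  proof -
    have "x + y = 0 \<longleftrightarrow> y = x" for x y :: 'a
      using char2_add_self[OF q c2, of x] by (metis add_left_cancel)
    then show ?thesis by (intro sum.cong[OF refl]) (simp add: orth)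
  qed
  also have "\<dots> = (\<Sum>x::'a\<in>UNIV. (2::int) ^ m)"
    by (rule sum.cong[OF refl]) (simp add: chi_sq)
  also have "\<dots> = 2 ^ (2 * m)" using q by (simp add: power_mult_distrib power_add[symmetric] mult_2)
  finally show ?thesis .
qed

lemma hweight_codeword: fixes g :: "'a \<Rightarrow> 'a" assumes "g 0 = 0"
  shows "hweight (codeword m g a b) = card {x. tr m (a * g x + b * x) \<noteq> 0}"
proof -
  have "{x. x \<noteq> 0 \<and> codeword m g a b x \<noteq> 0} = {x. tr m (a * g x + b * x) \<noteq> 0}"
    using assms tr_zero[OF q c2] by (auto simp: codeword_def)
  then show ?thesis unfolding hweight_def by simp
qed

lemma walsh_weight: fixes g :: "'a \<Rightarrow> 'a" assumes "g 0 = 0"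
  shows "walsh m g a b = 2 ^ m - 2 * int (hweight (codeword m g a b))"
proof -
  let ?P = "\<lambda>x. tr m (a * g x + b * x) = 0"
  have w: "walsh m g a b = int (card {x. ?P x}) - int (card {x. \<not> ?P x})"
    unfolding walsh_def by (simp add: sum.If_cases Compl_eq)
  have "card {x. ?P x} + card {x. \<not> ?P x} = 2 ^ m"
  proof -
    have "card {x. ?P x} + card {x. \<not> ?P x} = card ({x. ?P x} \<union> {x. \<not> ?P x})"
      by (rule card_Un_disjoint[symmetric]) auto
    also have "{x. ?P x} \<union> {x. \<not> ?P x} = UNIV" by auto
    finally show ?thesis using q by simp
  qed
  then have "int (card {x. ?P x} + card {x. \<not> ?P x}) = int (2 ^ m)" by simp
  then have e: "int (card {x. ?P x}) + int (card {x. \<not> ?P x}) = 2 ^ m" by simp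
  have h: "hweight (codeword m g a b) = card {x. \<not> ?P x}" using hweight_codeword[of g a b, OF assms] by simp
  show ?thesis unfolding h using w e by linarith
qed

end

context
  fixes m :: nat and j :: nat
  assumes q: "card (UNIV::'a::{field,finite} set) = 2 ^ m"
    and c2: "(1::'a) + 1 = 0"
    and mj: "m = 2 * j + 3"
begin

lemma walsh_vals:
  fixes g :: "'a \<Rightarrow> 'a"
  assumes ab: "almost_bent m g" and a: "a \<noteq> 0"
  shows "walsh m g a b \<in> {0, 4 * 2 ^ j, - (4 * 2 ^ j)}"
proof -
  have "(m + 1) div 2 = j + 2" using mj by simp
  then have "(2::int) ^ ((m + 1) div 2) = 4 * 2 ^ j" by simp
  moreover have "walsh m g a b \<in> {0, 2 ^ ((m + 1) div 2), - (2 ^ ((m + 1) div 2))}"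
    using ab a unfolding almost_bent_def by blast
  ultimately show ?thesis by simp
qed

lemma counts_nz:
  fixes g :: "'a \<Rightarrow> 'a"
  assumes ab: "almost_bent m g" and g0: "g 0 = 0" and a: "a \<noteq> 0"
  shows "int (card {b. walsh m g a b = 4 * 2 ^ j}) = 2 * 2 ^ j * 2 ^ j + 2 ^ j"
    and "int (card {b. walsh m g a b = - (4 * 2 ^ j)}) = 2 * 2 ^ j * 2 ^ j - 2 ^ j"
    and "int (card {b. walsh m g a b = 0}) = 4 * 2 ^ j * 2 ^ j"
proof -
  define K :: int where "K = 2 ^ j"
  have Kpos: "K > 0" unfolding K_def by simp
  let ?W = "walsh m g a"
  define Np where "Np = card {b. ?W b = 4 * K}"
  define Nn where "Nn = card {b. ?W b = - (4 * K)}"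
  define N0 where "N0 = card {b. ?W b = 0}"
  have vals: "?W b \<in> {0, 4 * K, - (4 * K)}" for b using walsh_vals[OF ab a] K_def by simp
  have qK: "(2::int) ^ m = 8 * K * K" unfolding K_def mj by (simp add: power_add power_mult power_mult_distrib[symmetric])
  have pw1: "?W b = 4 * K * of_bool (?W b = 4 * K) - 4 * K * of_bool (?W b = - (4 * K))" for b
    using vals[of b] Kpos by auto
  have pw2: "(?W b)^2 = 16 * K * K * of_bool (?W b = 4 * K) + 16 * K * K * of_bool (?W b = - (4 * K))" for b
    using vals[of b] Kpos by (auto simp: power2_eq_square)
  have pw3: "1 = of_bool (?W b = 4 * K) + of_bool (?W b = - (4 * K)) + (of_bool (?W b = 0) :: int)" for b
    using vals[of b] Kpos by auto
  have s1: "(\<Sum>b\<in>UNIV. ?W b) = 4 * K * int Np - 4 * K * int Nn"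
  proof -
    have "(\<Sum>b\<in>UNIV. ?W b) = (\<Sum>b\<in>UNIV. 4 * K * of_bool (?W b = 4 * K) - 4 * K * of_bool (?W b = - (4 * K)))"
      by (rule sum.cong[OF refl]) (rule pw1)
    then show ?thesis by (simp add: sum_subtractf sum_distrib_left[symmetric] Np_def Nn_def)
  qed
  have s2: "(\<Sum>b\<in>UNIV. (?W b)^2) = 16 * K * K * (int Np + int Nn)"
  proof -
    have "(\<Sum>b\<in>UNIV. (?W b)^2) = (\<Sum>b\<in>UNIV. 16 * K * K * of_bool (?W b = 4 * K) + 16 * K * K * of_bool (?W b = - (4 * K)))"
      by (rule sum.cong[OF refl]) (rule pw2)
    then show ?thesis by (simp add: sum.distrib sum_distrib_left[symmetric] distrib_left Np_def Nn_def)
  qed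
  have s3: "(\<Sum>b::'a\<in>UNIV. (1::int)) = int Np + int Nn + int N0"
  proof -
    have "(\<Sum>b::'a\<in>UNIV. (1::int)) = (\<Sum>b\<in>UNIV. of_bool (?W b = 4 * K) + of_bool (?W b = - (4 * K)) + (of_bool (?W b = 0) :: int))"
      by (rule sum.cong[OF refl]) (rule pw3)
    then show ?thesis by (simp add: sum.distrib Np_def Nn_def N0_def)
  qed
  have e1: "4 * K * (int Np - int Nn) = 8 * K * K"
    using s1 walsh_sum[OF q c2, of g a, OF g0] qK by (simp add: algebra_simps)
  have e2: "16 * K * K * (int Np + int Nn) = 64 * K * K * K * K"
  proof -
    have "(2::int) ^ (2 * m) = 2 ^ m * 2 ^ m" by (simp add: mult_2 power_add)
    then show ?thesis using s2 walsh_sq[OF q c2, of g a] qK by (simp add: algebra_simps)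
  qed
  have e3: "int Np + int Nn + int N0 = 8 * K * K" using s3 q qK by simp
  have f1: "int Np - int Nn = 2 * K"
  proof -
    have "(4 * K) * (int Np - int Nn) = (4 * K) * (2 * K)" using e1 by (simp add: algebra_simps)
    moreover have "4 * K \<noteq> 0" using Kpos by simp
    ultimately show ?thesis by (metis mult_left_cancel)
  qed
  have f2: "int Np + int Nn = 4 * K * K"
  proof -
    have "(16 * K * K) * (int Np + int Nn) = (16 * K * K) * (4 * K * K)" using e2 by (simp add: algebra_simps)
    moreover have "16 * K * K \<noteq> 0" using Kpos by simp
    ultimately show ?thesis by (metis mult_left_cancel)
  qed
  show "int (card {b. walsh m g a b = 4 * 2 ^ j}) = 2 * 2 ^ j * 2 ^ j + 2 ^ j"
    using f1 f2 unfolding Np_def K_def by simp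
  show "int (card {b. walsh m g a b = - (4 * 2 ^ j)}) = 2 * 2 ^ j * 2 ^ j - 2 ^ j"
    using f1 f2 unfolding Nn_def K_def by simp
  show "int (card {b. walsh m g a b = 0}) = 4 * 2 ^ j * 2 ^ j"
    using f1 f2 e3 unfolding N0_def K_def by simp
qed

end

lemma hweight_zero_iff:
  fixes c :: "'a::field \<Rightarrow> 'a"
  assumes "finite (UNIV :: 'a set)" and "c 0 = 0"
  shows "hweight c = 0 \<longleftrightarrow> c = (\<lambda>x. 0)"
proof
  assume "hweight c = 0"
  then have "{x. x \<noteq> 0 \<and> c x \<noteq> 0} = {}" unfolding hweight_def
    using assms(1) by (simp add: finite_subset[of _ UNIV])
  then have all: "\<forall>x. x = 0 \<or> c x = 0" by auto
  show "c = (\<lambda>x. 0)"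
  proof (rule ext)
    fix x show "c x = 0" using all assms(2) by (cases "x = 0") auto
  qed
next
  assume "c = (\<lambda>x. 0)" then show "hweight c = 0" unfolding hweight_def by simp
qed

lemma sum_split0:
  fixes f :: "'b \<Rightarrow> nat"
  assumes "finite A" "z \<in> A" "\<And>a. a \<in> A \<Longrightarrow> a \<noteq> z \<Longrightarrow> f a = k"
  shows "(\<Sum>a\<in>A. f a) = f z + (card A - 1) * k"
proof -
  have "(\<Sum>a\<in>A. f a) = f z + (\<Sum>a\<in>A - {z}. f a)" using assms by (simp add: sum.remove)
  also have "(\<Sum>a\<in>A - {z}. f a) = (\<Sum>a\<in>A - {z}. k)" using assms by (intro sum.cong) auto
  also have "\<dots> = (card A - 1) * k" using assms by simp
  finally show ?thesis .
qed

context
  fixes m :: nat and j :: nat and g :: "'a::{field,finite} \<Rightarrow> 'a"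
  assumes q: "card (UNIV::'a set) = 2 ^ m"
    and c2: "(1::'a) + 1 = 0"
    and mj: "m = 2 * j + 3"
    and ab: "almost_bent m g" and g0: "g 0 = 0"
begin

lemma qK': "(2::int) ^ m = 8 * 2 ^ j * 2 ^ j"
  unfolding mj by (simp add: power_add power_mult power_mult_distrib[symmetric])

lemma hw_int: "2 * int (hweight (codeword m g a b)) = 8 * 2 ^ j * 2 ^ j - walsh m g a b"
  using walsh_weight[OF q c2, of g a b, OF g0] qK' by simp

lemma walsh0: "walsh m g 0 b = (if b = 0 then 2 ^ m else 0)"
proof (cases "b = 0")
  case True
  then show ?thesis unfolding walsh_def using tr_zero[OF q c2] q by simp
next
  case False
  have "walsh m g 0 b = (\<Sum>x\<in>UNIV. chi (tr m (b * x)))"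
    unfolding walsh_eq[OF q c2] using tr_zero[OF q c2] by (simp add: chi_def)
  then show ?thesis using char_sum[OF q c2 False] False by simp
qed

lemma hw0: "hweight (codeword m g 0 b) = (if b = 0 then 0 else 4 * 2 ^ j * 2 ^ j)"
proof -
  have "2 * int (hweight (codeword m g 0 b)) = 2 * (if b = 0 then 0 else 4 * 2 ^ j * 2 ^ j)"
    using hw_int[of 0 b] walsh0[of b] qK' by auto
  then have "int (hweight (codeword m g 0 b)) = (if b = 0 then 0 else 4 * 2 ^ j * 2 ^ j)" by simp
  then have "int (hweight (codeword m g 0 b)) = int (if b = 0 then 0 else 4 * 2 ^ j * 2 ^ j)" by simp
  then show ?thesis by (simp only: of_nat_eq_iff)
qed

lemma hw_nz:
  assumes a: "a \<noteq> 0"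
  shows "hweight (codeword m g a b) = 4 * 2 ^ j * 2 ^ j - 2 * 2 ^ j \<longleftrightarrow> walsh m g a b = 4 * 2 ^ j"
    and "hweight (codeword m g a b) = 4 * 2 ^ j * 2 ^ j \<longleftrightarrow> walsh m g a b = 0"
    and "hweight (codeword m g a b) = 4 * 2 ^ j * 2 ^ j + 2 * 2 ^ j \<longleftrightarrow> walsh m g a b = - (4 * 2 ^ j)"
    and "hweight (codeword m g a b) \<in> {4 * 2 ^ j * 2 ^ j - 2 * 2 ^ j, 4 * 2 ^ j * 2 ^ j, 4 * 2 ^ j * 2 ^ j + 2 * 2 ^ j}"
proof -
  define K :: nat where "K = 2 ^ j"
  have K1: "K \<ge> 1" unfolding K_def by simp
  have le: "2 * K \<le> 4 * K * K" using K1 by (simp add: mult_le_mono)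
  have h: "2 * int (hweight (codeword m g a b)) = 8 * int K * int K - walsh m g a b"
    using hw_int[of a b] unfolding K_def by simp
  have v: "walsh m g a b \<in> {0, 4 * int K, - (4 * int K)}"
    using walsh_vals[OF q c2 mj ab a, of b] unfolding K_def by simp
  have i1: "int (4 * K * K - 2 * K) = 4 * int K * int K - 2 * int K" using le by (simp add: of_nat_diff)
  show "hweight (codeword m g a b) = 4 * 2 ^ j * 2 ^ j - 2 * 2 ^ j \<longleftrightarrow> walsh m g a b = 4 * 2 ^ j"
  proof -
    have "hweight (codeword m g a b) = 4 * K * K - 2 * K \<longleftrightarrow> int (hweight (codeword m g a b)) = int (4 * K * K - 2 * K)"
      by (simp only: of_nat_eq_iff)
    also have "\<dots> \<longleftrightarrow> walsh m g a b = 4 * int K" unfolding i1 using h by (simp only: of_nat_mult of_nat_add of_nat_numeral mult.assoc) linarith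
    finally show ?thesis unfolding K_def by simp
  qed
  show "hweight (codeword m g a b) = 4 * 2 ^ j * 2 ^ j \<longleftrightarrow> walsh m g a b = 0"
  proof -
    have "hweight (codeword m g a b) = 4 * K * K \<longleftrightarrow> int (hweight (codeword m g a b)) = int (4 * K * K)"
      by (simp only: of_nat_eq_iff)
    also have "\<dots> \<longleftrightarrow> walsh m g a b = 0" using h by (simp only: of_nat_mult of_nat_add of_nat_numeral mult.assoc) linarith
    finally show ?thesis unfolding K_def by simp
  qed
  show "hweight (codeword m g a b) = 4 * 2 ^ j * 2 ^ j + 2 * 2 ^ j \<longleftrightarrow> walsh m g a b = - (4 * 2 ^ j)"
  proof -
    have "hweight (codeword m g a b) = 4 * K * K + 2 * K \<longleftrightarrow> int (hweight (codeword m g a b)) = int (4 * K * K + 2 * K)"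
      by (simp only: of_nat_eq_iff)
    also have "\<dots> \<longleftrightarrow> walsh m g a b = - (4 * int K)" using h by (simp only: of_nat_mult of_nat_add of_nat_numeral mult.assoc) linarith
    finally show ?thesis unfolding K_def by simp
  qed
  show "hweight (codeword m g a b) \<in> {4 * 2 ^ j * 2 ^ j - 2 * 2 ^ j, 4 * 2 ^ j * 2 ^ j, 4 * 2 ^ j * 2 ^ j + 2 * 2 ^ j}"
  proof -
    have "int (hweight (codeword m g a b)) \<in> {4 * int K * int K - 2 * int K, 4 * int K * int K, 4 * int K * int K + 2 * int K}"
      using h v by auto
    then have "int (hweight (codeword m g a b)) \<in> {int (4 * K * K - 2 * K), int (4 * K * K), int (4 * K * K + 2 * K)}"
      unfolding i1 by simp
    then have "hweight (codeword m g a b) \<in> {4 * K * K - 2 * K, 4 * K * K, 4 * K * K + 2 * K}"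
      by (simp only: insert_iff empty_iff of_nat_eq_iff)
    then show ?thesis unfolding K_def .
  qed
qed

lemma cnt_nz:
  assumes a: "a \<noteq> 0"
  shows "card {b. hweight (codeword m g a b) = 4 * 2 ^ j * 2 ^ j - 2 * 2 ^ j} = 2 * 2 ^ j * 2 ^ j + 2 ^ j"
    and "card {b. hweight (codeword m g a b) = 4 * 2 ^ j * 2 ^ j} = 4 * 2 ^ j * 2 ^ j"
    and "card {b. hweight (codeword m g a b) = 4 * 2 ^ j * 2 ^ j + 2 * 2 ^ j} = 2 * 2 ^ j * 2 ^ j - 2 ^ j"
proof -
  have le: "(2::nat) ^ j \<le> 2 * 2 ^ j * 2 ^ j" by simp
  have "int (card {b. hweight (codeword m g a b) = 4 * 2 ^ j * 2 ^ j - 2 * 2 ^ j}) = 2 * 2 ^ j * 2 ^ j + 2 ^ j"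
    using counts_nz(1)[OF q c2 mj ab g0 a] hw_nz(1)[OF a] by simp
  also have "(2 * 2 ^ j * 2 ^ j + 2 ^ j :: int) = int (2 * 2 ^ j * 2 ^ j + 2 ^ j)" by simp
  finally show "card {b. hweight (codeword m g a b) = 4 * 2 ^ j * 2 ^ j - 2 * 2 ^ j} = 2 * 2 ^ j * 2 ^ j + 2 ^ j"
    by (simp only: of_nat_eq_iff)
  have "int (card {b. hweight (codeword m g a b) = 4 * 2 ^ j * 2 ^ j}) = 4 * 2 ^ j * 2 ^ j"
    using counts_nz(3)[OF q c2 mj ab g0 a] hw_nz(2)[OF a] by simp
  also have "(4 * 2 ^ j * 2 ^ j :: int) = int (4 * 2 ^ j * 2 ^ j)" by simp
  finally show "card {b. hweight (codeword m g a b) = 4 * 2 ^ j * 2 ^ j} = 4 * 2 ^ j * 2 ^ j"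
    by (simp only: of_nat_eq_iff)
  have "int (card {b. hweight (codeword m g a b) = 4 * 2 ^ j * 2 ^ j + 2 * 2 ^ j}) = 2 * 2 ^ j * 2 ^ j - 2 ^ j"
    using counts_nz(2)[OF q c2 mj ab g0 a] hw_nz(3)[OF a] by simp
  also have "(2 * 2 ^ j * 2 ^ j - 2 ^ j :: int) = int (2 * 2 ^ j * 2 ^ j - 2 ^ j)" using le by (simp add: of_nat_diff)
  finally show "card {b. hweight (codeword m g a b) = 4 * 2 ^ j * 2 ^ j + 2 * 2 ^ j} = 2 * 2 ^ j * 2 ^ j - 2 ^ j"
    by (simp only: of_nat_eq_iff)
qed

end

context
  fixes m :: nat and j :: nat and g :: "'a::{field,finite} \<Rightarrow> 'a" and A :: "'a set" and r :: nat
  assumes q: "card (UNIV::'a set) = 2 ^ m"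
    and c2: "(1::'a) + 1 = 0"
    and mj: "m = 2 * j + 3"
    and ab: "almost_bent m g" and g0: "g 0 = 0"
    and asg: "additive_subgroup A" and cA: "card A = 2 ^ r"
begin

lemma codeword_add: "codeword m g a b x + codeword m g a' b' x = codeword m g (a + a') (b + b') x"
  unfolding codeword_def using tr_add[OF q c2] by (simp add: algebra_simps)

lemma codeword_0: "codeword m g a b 0 = 0" unfolding codeword_def by simp

lemma codeword_00: "codeword m g 0 0 = (\<lambda>x. 0)"
  unfolding codeword_def using tr_zero[OF q c2] by (simp add: fun_eq_iff)

lemma code_eq: "code_gA m g A = (\<lambda>(a, b). codeword m g a b) ` (A \<times> UNIV)"
  unfolding code_gA_def by auto

lemma hw_zero_iff: "hweight (codeword m g a b) = 0 \<longleftrightarrow> a = 0 \<and> b = 0"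
proof
  assume h: "hweight (codeword m g a b) = 0"
  have K: "(0::nat) < 4 * 2 ^ j * 2 ^ j - 2 * 2 ^ j"
  proof -
    have k1: "(1::nat) \<le> 2 ^ j" by simp
    have "4 * 2 ^ j * 1 \<le> 4 * 2 ^ j * (2::nat) ^ j" using k1 by (rule mult_le_mono2)
    moreover have "2 * 2 ^ j < 4 * (2::nat) ^ j" by simp
    ultimately show ?thesis by linarith
  qed
  have "a = 0"
  proof (rule ccontr)
    assume "a \<noteq> 0"
    from hw_nz(4)[OF q c2 mj ab g0 this, of b] h K show False by auto
  qed
  moreover have "b = 0" using hw0[OF q c2 mj ab g0, of b] h \<open>a = 0\<close> by (simp split: if_splits)
  ultimately show "a = 0 \<and> b = 0" ..
next
  assume "a = 0 \<and> b = 0" then show "hweight (codeword m g a b) = 0"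
    using hw0[OF q c2 mj ab g0, of 0] by simp
qed

lemma inj_cw: "inj_on (\<lambda>(a, b). codeword m g a b) S"
proof (rule inj_onI, clarsimp)
  fix a b a' b'
  assume e: "codeword m g a b = codeword m g a' b'"
  have "codeword m g (a + a') (b + b') = (\<lambda>x. 0)"
  proof
    fix x
    have "codeword m g (a + a') (b + b') x = codeword m g a b x + codeword m g a' b' x"
      by (simp add: codeword_add)
    also have "\<dots> = 0" using e char2_add_self[OF q c2] by simp
    finally show "codeword m g (a + a') (b + b') x = 0" .
  qed
  then have "hweight (codeword m g (a + a') (b + b')) = 0" unfolding hweight_def by simp
  then have "a + a' = 0" "b + b' = 0" using hw_zero_iff by auto
  then show "a = a' \<and> b = b'" using char2_minus[OF q c2] by (metis add_eq_0_iff)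
qed

lemma finA: "finite A" by simp

lemma zeroA: "0 \<in> A" using asg unfolding additive_subgroup_def by simp

lemma card_code: "card (code_gA m g A) = 2 ^ r * 2 ^ m"
  unfolding code_eq using card_image[OF inj_cw[of "A \<times> UNIV"]] cA q by (simp add: card_cartesian_product)

lemma count_w: "card {c \<in> code_gA m g A. hweight c = w} = (\<Sum>a\<in>A. card {b. hweight (codeword m g a b) = w})"
proof -
  let ?f = "\<lambda>(a, b). codeword m g a b"
  have "{c \<in> code_gA m g A. hweight c = w} = ?f ` (SIGMA a:A. {b. hweight (codeword m g a b) = w})"
    unfolding code_eq by auto
  then have "card {c \<in> code_gA m g A. hweight c = w} = card (SIGMA a:A. {b. hweight (codeword m g a b) = w})"
    using card_image[OF inj_cw] by simp
  also have "\<dots> = (\<Sum>a\<in>A. card {b. hweight (codeword m g a b) = w})" by simp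
  finally show ?thesis .
qed

lemma count_w_split:
  assumes "\<And>a. a \<noteq> 0 \<Longrightarrow> card {b. hweight (codeword m g a b) = w} = k"
  shows "card {c \<in> code_gA m g A. hweight c = w} = card {b. hweight (codeword m g 0 b) = w} + (2 ^ r - 1) * k"
  unfolding count_w using sum_split0[OF finA zeroA, of "\<lambda>a. card {b. hweight (codeword m g a b) = w}" k] assms cA
  by simp

lemma weights_all: "c \<in> code_gA m g A \<Longrightarrow> hweight c \<in> {0, 4 * 2 ^ j * 2 ^ j - 2 * 2 ^ j, 4 * 2 ^ j * 2 ^ j, 4 * 2 ^ j * 2 ^ j + 2 * 2 ^ j}"
proof -
  assume "c \<in> code_gA m g A"
  then obtain a b where c: "c = codeword m g a b" unfolding code_gA_def by auto
  show ?thesis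
  proof (cases "a = 0")
    case True then show ?thesis using c hw0[OF q c2 mj ab g0, of b] by simp
  next
    case False then show ?thesis using c hw_nz(4)[OF q c2 mj ab g0 False, of b] by simp
  qed
qed

end

lemma arith_w2: fixes K r :: nat assumes "K \<ge> 1"
  shows "(8 * K * K - 1) + (2 ^ r - 1) * (4 * K * K) = 4 * K * K * (2 ^ r + 1) - 1"
proof -
  obtain R where R: "(2::nat) ^ r = Suc R" using not0_implies_Suc[of "2^r"] by auto
  obtain X where X: "K * K = Suc X" using assms not0_implies_Suc[of "K*K"] by auto
  have "(8 * K * K - 1) + (2 ^ r - 1) * (4 * K * K) = (8 * (K * K) - 1) + (2 ^ r - 1) * (4 * (K * K))"
    by (simp add: mult.assoc)
  also have "\<dots> = 4 * (K * K) * (2 ^ r + 1) - 1" unfolding X R by (simp add: algebra_simps)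
  also have "\<dots> = 4 * K * K * (2 ^ r + 1) - 1" by (simp add: mult.assoc)
  finally show ?thesis .
qed

theorem theorem2:
  fixes g :: "'a::{field,finite} \<Rightarrow> 'a" and A :: "'a set" and m r :: nat
  assumes "odd m" and "m \<ge> 3"
    and "card (UNIV :: 'a set) = 2 ^ m" and "(1::'a) + 1 = 0"
    and "almost_bent m g" and "g 0 = 0"
    and "additive_subgroup A" and "card A = 2 ^ r" and "r \<le> m"
  shows "(\<forall>c\<in>code_gA m g A. \<forall>x. c x \<in> {0, 1})
    \<and> (\<lambda>x. 0) \<in> code_gA m g A
    \<and> (\<forall>c1\<in>code_gA m g A. \<forall>c2\<in>code_gA m g A. (\<lambda>x. c1 x + c2 x) \<in> code_gA m g A)
    \<and> card {x::'a. x \<noteq> 0} = 2 ^ m - 1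
    \<and> card (code_gA m g A) = 2 ^ (m + r)
    \<and> (r \<ge> 1 \<longrightarrow> Min {hweight c | c. c \<in> code_gA m g A \<and> c \<noteq> (\<lambda>x. 0)}
                    = 2 ^ (m - 1) - 2 ^ ((m - 1) div 2))
    \<and> card {c \<in> code_gA m g A. hweight c = 0} = 1
    \<and> card {c \<in> code_gA m g A. hweight c = 2 ^ (m - 1) - 2 ^ ((m - 1) div 2)}
        = (2 ^ r - 1) * (2 ^ (m - 2) + 2 ^ ((m - 3) div 2))
    \<and> card {c \<in> code_gA m g A. hweight c = 2 ^ (m - 1)} = 2 ^ (m - 1) * (2 ^ r + 1) - 1
    \<and> card {c \<in> code_gA m g A. hweight c = 2 ^ (m - 1) + 2 ^ ((m - 1) div 2)}
        = (2 ^ r - 1) * (2 ^ (m - 2) - 2 ^ ((m - 3) div 2))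
    \<and> (\<forall>c\<in>code_gA m g A. hweight c \<in> {0, 2 ^ (m - 1) - 2 ^ ((m - 1) div 2), 2 ^ (m - 1),
                                        2 ^ (m - 1) + 2 ^ ((m - 1) div 2)})"
proof -
  note q = assms(3) and c2 = assms(4) and ab = assms(5) and g0 = assms(6)
    and asg = assms(7) and cA = assms(8)
  define j where "j = m div 2 - 1"
  have mj: "m = 2 * j + 3" using assms(1,2) unfolding j_def by presburger
  have e: "(2::nat) ^ (2 * j) = 2 ^ j * 2 ^ j" by (simp add: power_mult power2_eq_square mult.commute[of 2])
  have p1: "(2::nat) ^ (m - 1) = 4 * 2 ^ j * 2 ^ j" using e unfolding mj by (simp add: power_add)
  have p2: "(2::nat) ^ ((m - 1) div 2) = 2 * 2 ^ j" unfolding mj by simp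
  have p3: "(2::nat) ^ (m - 2) = 2 * 2 ^ j * 2 ^ j" using e unfolding mj by (simp add: power_add)
  have p4: "(2::nat) ^ ((m - 3) div 2) = 2 ^ j" unfolding mj by simp
  have pm: "(2::nat) ^ m = 8 * 2 ^ j * 2 ^ j" using e unfolding mj by (simp add: power_add)
  note facts = codeword_add[OF q c2 mj ab g0 asg cA] codeword_00[OF q c2 mj ab g0 asg cA]
    code_eq[OF q c2 mj ab g0 asg cA] hw_zero_iff[OF q c2 mj ab g0 asg cA]
    card_code[OF q c2 mj ab g0 asg cA] zeroA[OF q c2 mj ab g0 asg cA]
    weights_all[OF q c2 mj ab g0 asg cA]
  let ?C = "code_gA m g A"
  let ?K = "(2::nat) ^ j"
  have Kpos: "?K \<ge> 1" by simp
  have w1pos: "0 < 4 * ?K * ?K - 2 * ?K"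
  proof -
    have "4 * ?K * 1 \<le> 4 * ?K * ?K" using Kpos by (rule mult_le_mono2)
    moreover have "2 * ?K < 4 * ?K" by simp
    ultimately show ?thesis by linarith
  qed
  have w1ne: "4 * ?K * ?K - 2 * ?K \<noteq> 4 * ?K * ?K" using w1pos Kpos by linarith
  have Rpos: "(2::nat) ^ r \<ge> 1" by simp
  have hw0': "\<And>b. hweight (codeword m g 0 b) = (if b = 0 then 0 else 4 * ?K * ?K)"
    using hw0[OF q c2 mj ab g0] by simp
  have cnt: "\<And>a. a \<noteq> 0 \<Longrightarrow> card {b. hweight (codeword m g a b) = 4 * ?K * ?K - 2 * ?K} = 2 * ?K * ?K + ?K"
            "\<And>a. a \<noteq> 0 \<Longrightarrow> card {b. hweight (codeword m g a b) = 4 * ?K * ?K} = 4 * ?K * ?K"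
            "\<And>a. a \<noteq> 0 \<Longrightarrow> card {b. hweight (codeword m g a b) = 4 * ?K * ?K + 2 * ?K} = 2 * ?K * ?K - ?K"
    using cnt_nz[OF q c2 mj ab g0] by auto
  have inC: "\<And>c. c \<in> ?C \<Longrightarrow> \<exists>a b. a \<in> A \<and> c = codeword m g a b"
    unfolding code_gA_def by auto
  have cw0: "\<And>c. c \<in> ?C \<Longrightarrow> hweight c = 0 \<longleftrightarrow> c = (\<lambda>x. 0)"
  proof -
    fix c assume "c \<in> ?C"
    then obtain a b where "c = codeword m g a b" using inC by blast
    then show "hweight c = 0 \<longleftrightarrow> c = (\<lambda>x. 0)"
      using hweight_zero_iff[of c] codeword_0[OF q c2 mj ab g0 asg cA] by simp
  qed
  have zC: "(\<lambda>x. 0) \<in> ?C"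
  proof -
    have "codeword m g 0 0 \<in> ?C" using facts(6) unfolding code_gA_def by blast
    then show ?thesis unfolding facts(2) .
  qed
  have finC: "finite ?C" by simp
  have G1: "\<forall>c\<in>?C. \<forall>x. c x \<in> {0, 1}"
  proof (intro ballI allI)
    fix c x assume "c \<in> ?C"
    then obtain a b where "c = codeword m g a b" using inC by blast
    then show "c x \<in> {0, 1}" unfolding codeword_def using tr_01[OF q c2] by auto
  qed
  have G3: "\<forall>c1\<in>?C. \<forall>c2\<in>?C. (\<lambda>x. c1 x + c2 x) \<in> ?C"
  proof (intro ballI)
    fix c1 c2 assume "c1 \<in> ?C" "c2 \<in> ?C"
    then obtain a1 b1 a2 b2 where "a1 \<in> A" "a2 \<in> A" "c1 = codeword m g a1 b1" "c2 = codeword m g a2 b2"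
      using inC by metis
    moreover have "a1 + a2 \<in> A" using asg \<open>a1 \<in> A\<close> \<open>a2 \<in> A\<close> unfolding additive_subgroup_def by blast
    ultimately have "(\<lambda>x. c1 x + c2 x) = codeword m g (a1 + a2) (b1 + b2)" "a1 + a2 \<in> A"
      using facts(1) by (auto simp: fun_eq_iff)
    then show "(\<lambda>x. c1 x + c2 x) \<in> ?C" unfolding code_gA_def by blast
  qed
  have G4: "card {x::'a. x \<noteq> 0} = 2 ^ m - 1"
  proof -
    have "{x::'a. x \<noteq> 0} = UNIV - {0}" by auto
    then show ?thesis using q by (simp add: card_Diff_subset)
  qed
  have G5: "card ?C = 2 ^ (m + r)" using facts(5) by (simp add: power_add mult.commute)
  have G7: "card {c \<in> ?C. hweight c = 0} = 1"
  proof -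
    have "{c \<in> ?C. hweight c = 0} = {\<lambda>x. 0}" using cw0 zC by auto
    then show ?thesis by simp
  qed
  have G8: "card {c \<in> ?C. hweight c = 4 * ?K * ?K - 2 * ?K} = (2 ^ r - 1) * (2 * ?K * ?K + ?K)"
  proof -
    have "{b. hweight (codeword m g 0 b) = 4 * ?K * ?K - 2 * ?K} = {}"
      using hw0' w1pos w1ne by auto
    then show ?thesis using count_w_split[OF q c2 mj ab g0 asg cA, OF cnt(1)] by simp
  qed
  have G9: "card {c \<in> ?C. hweight c = 4 * ?K * ?K} = 4 * ?K * ?K * (2 ^ r + 1) - 1"
  proof -
    have "{b. hweight (codeword m g 0 b) = 4 * ?K * ?K} = {b. b \<noteq> 0}"
      using hw0' w1pos by auto
    then have "card {c \<in> ?C. hweight c = 4 * ?K * ?K} = (2 ^ m - 1) + (2 ^ r - 1) * (4 * ?K * ?K)"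
      using count_w_split[OF q c2 mj ab g0 asg cA, OF cnt(2)] G4 by simp
    also have "\<dots> = 4 * ?K * ?K * (2 ^ r + 1) - 1"
      unfolding pm using arith_w2[OF Kpos, of r] .
    finally show ?thesis .
  qed
  have G10: "card {c \<in> ?C. hweight c = 4 * ?K * ?K + 2 * ?K} = (2 ^ r - 1) * (2 * ?K * ?K - ?K)"
  proof -
    have "{b. hweight (codeword m g 0 b) = 4 * ?K * ?K + 2 * ?K} = {}"
      using hw0' by auto
    then show ?thesis using count_w_split[OF q c2 mj ab g0 asg cA, OF cnt(3)] by simp
  qed
  have G6: "r \<ge> 1 \<longrightarrow> Min {hweight c | c. c \<in> ?C \<and> c \<noteq> (\<lambda>x. 0)} = 4 * ?K * ?K - 2 * ?K"
  proof
    assume r1: "r \<ge> 1"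
    let ?S = "{hweight c | c. c \<in> ?C \<and> c \<noteq> (\<lambda>x. 0)}"
    have finS: "finite ?S"
    proof -
      have "?S \<subseteq> hweight ` ?C" by auto
      then show ?thesis using finC finite_surj by blast
    qed
    have lb: "\<And>y. y \<in> ?S \<Longrightarrow> 4 * ?K * ?K - 2 * ?K \<le> y"
    proof -
      fix y assume "y \<in> ?S"
      then obtain c where c: "y = hweight c" "c \<in> ?C" "c \<noteq> (\<lambda>x. 0)" by blast
      then have "y \<noteq> 0" using cw0 by blast
      moreover have "y \<in> {0, 4 * ?K * ?K - 2 * ?K, 4 * ?K * ?K, 4 * ?K * ?K + 2 * ?K}"
        using facts(7)[OF c(2)] c(1) by simp
      ultimately show "4 * ?K * ?K - 2 * ?K \<le> y" by auto
    qed
    have mem: "4 * ?K * ?K - 2 * ?K \<in> ?S"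
    proof -
      have "\<exists>a\<in>A. a \<noteq> 0"
      proof (rule ccontr)
        assume "\<not> (\<exists>a\<in>A. a \<noteq> 0)"
        then have "A \<subseteq> {0}" by auto
        then have "card A \<le> 1" using card_mono[of "{0}" A] by simp
        moreover have "(2::nat) ^ r \<ge> 2 ^ 1" using r1 by (intro power_increasing) auto
        ultimately show False using cA by simp
      qed
      then obtain a where a: "a \<in> A" "a \<noteq> 0" by blast
      have "card {b. hweight (codeword m g a b) = 4 * ?K * ?K - 2 * ?K} \<noteq> 0" using cnt(1)[OF a(2)] by simp
      then obtain b where b: "hweight (codeword m g a b) = 4 * ?K * ?K - 2 * ?K"
        by (metis (mono_tags, lifting) card.empty empty_Collect_eq)
      have "codeword m g a b \<in> ?C" using a unfolding code_gA_def by auto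
      moreover have "codeword m g a b \<noteq> (\<lambda>x. 0)" using b w1pos by (auto simp: hweight_def)
      ultimately show ?thesis using b by (metis (mono_tags, lifting) mem_Collect_eq)
    qed
    show "Min ?S = 4 * ?K * ?K - 2 * ?K" by (rule Min_eqI[OF finS lb mem])
  qed
  have G11: "\<forall>c\<in>?C. hweight c \<in> {0, 4 * ?K * ?K - 2 * ?K, 4 * ?K * ?K, 4 * ?K * ?K + 2 * ?K}"
    using facts(7) by blast
  show ?thesis unfolding p1 p2 p3 p4
    using G1 zC G3 G4 G5 G6 G7 G8 G9 G10 G11 by (intro conjI) assumption+
qed

end
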